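(* (i) In every weakly orthomodular lattice, $(a\equiv b)\to_0((a\equiv c)\equiv(b\equiv c)) = 1$ for all elements $a,b,c$. (ii) There exists a weakly orthomodular lattice containing elements $a,b,c$ with $(a\equiv b)\cap((b\equiv c)\cup(a\equiv c)) \ne ((a\equiv b)\cap(b\equiv c))\cup((a\equiv b)\cap(a\equiv c))$.
   Context: A weakly orthomodular lattice (WOML) is an ortholattice $(L,\cap,\cup,{}',0,1)$ satisfying $(a'\cap(a\cup b))\cup b'\cup(a\cap b)=1$ for all $a,b$. Notation: $a\equiv b=(a\cap b)\cup(a'\cap b')$ and $a\to_0 b=a'\cup b$. *)

theory Defs
  imports Main
begin

definition ortholattice_on ::
  "'a set \<Rightarrow> ('a \<Rightarrow> 'a \<Rightarrow> 'a) \<Rightarrow> ('a \<Rightarrow> 'a \<Rightarrow> 'a) \<Rightarrow> ('a \<Rightarrow> 'a) \<Rightarrow> 'a \<Rightarrow> 'a \<Rightarrow> bool"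
  where
  "ortholattice_on A meet join compl z u \<longleftrightarrow>
     z \<in> A \<and> u \<in> A \<and>
     (\<forall>x\<in>A. \<forall>y\<in>A. meet x y \<in> A \<and> join x y \<in> A) \<and>
     (\<forall>x\<in>A. compl x \<in> A) \<and>
     (\<forall>x\<in>A. \<forall>y\<in>A. meet x y = meet y x \<and> join x y = join y x) \<and>
     (\<forall>x\<in>A. \<forall>y\<in>A. \<forall>w\<in>A. meet (meet x y) w = meet x (meet y w) \<and>
                              join (join x y) w = join x (join y w)) \<and>
     (\<forall>x\<in>A. \<forall>y\<in>A. meet x (join x y) = x \<and> join x (meet x y) = x) \<and>
     (\<forall>x\<in>A. meet z x = z \<and> join u x = u) \<and>
     (\<forall>x\<in>A. compl (compl x) = x) \<and>
     (\<forall>x\<in>A. \<forall>y\<in>A. meet x y = x \<longrightarrow> meet (compl y) (compl x) = compl y) \<and>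
     (\<forall>x\<in>A. meet x (compl x) = z \<and> join x (compl x) = u)"

definition woml_on ::
  "'a set \<Rightarrow> ('a \<Rightarrow> 'a \<Rightarrow> 'a) \<Rightarrow> ('a \<Rightarrow> 'a \<Rightarrow> 'a) \<Rightarrow> ('a \<Rightarrow> 'a) \<Rightarrow> 'a \<Rightarrow> 'a \<Rightarrow> bool"
  where
  "woml_on A meet join compl z u \<longleftrightarrow>
     ortholattice_on A meet join compl z u \<and>
     (\<forall>a\<in>A. \<forall>b\<in>A.
        join (join (meet (compl a) (join a b)) (compl b)) (meet a b) = u)"

definition bieq :: "('a \<Rightarrow> 'a \<Rightarrow> 'a) \<Rightarrow> ('a \<Rightarrow> 'a \<Rightarrow> 'a) \<Rightarrow> ('a \<Rightarrow> 'a) \<Rightarrow> 'a \<Rightarrow> 'a \<Rightarrow> 'a"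
  where "bieq meet join compl a b = join (meet a b) (meet (compl a) (compl b))"

definition impl0 :: "('a \<Rightarrow> 'a \<Rightarrow> 'a) \<Rightarrow> ('a \<Rightarrow> 'a) \<Rightarrow> 'a \<Rightarrow> 'a \<Rightarrow> 'a"
  where "impl0 join compl a b = join (compl a) b"

end

theory Submission
  imports Defs
begin

locale W =
  fixes A :: "'a set" and meet join :: "'a \<Rightarrow> 'a \<Rightarrow> 'a" and compl :: "'a \<Rightarrow> 'a" and z u :: 'a
  assumes WO: "woml_on A meet join compl z u"
begin

lemma OL: "ortholattice_on A meet join compl z u" using WO unfolding woml_on_def by blast

lemma zA[simp]: "z \<in> A" and uA[simp]: "u \<in> A" using OL unfolding ortholattice_on_def by auto
lemma mA[simp]: "x \<in> A \<Longrightarrow> y \<in> A \<Longrightarrow> meet x y \<in> A" using OL unfolding ortholattice_on_def by auto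
lemma jA[simp]: "x \<in> A \<Longrightarrow> y \<in> A \<Longrightarrow> join x y \<in> A" using OL unfolding ortholattice_on_def by auto
lemma cA[simp]: "x \<in> A \<Longrightarrow> compl x \<in> A" using OL unfolding ortholattice_on_def by auto
lemma mc: "x \<in> A \<Longrightarrow> y \<in> A \<Longrightarrow> meet x y = meet y x" using OL unfolding ortholattice_on_def by auto
lemma jc: "x \<in> A \<Longrightarrow> y \<in> A \<Longrightarrow> join x y = join y x" using OL unfolding ortholattice_on_def by auto
lemma ma: "x \<in> A \<Longrightarrow> y \<in> A \<Longrightarrow> w \<in> A \<Longrightarrow> meet (meet x y) w = meet x (meet y w)"
  using OL unfolding ortholattice_on_def by auto
lemma ja: "x \<in> A \<Longrightarrow> y \<in> A \<Longrightarrow> w \<in> A \<Longrightarrow> join (join x y) w = join x (join y w)"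
  using OL unfolding ortholattice_on_def by auto
lemma ab1: "x \<in> A \<Longrightarrow> y \<in> A \<Longrightarrow> meet x (join x y) = x" using OL unfolding ortholattice_on_def by auto
lemma ab2: "x \<in> A \<Longrightarrow> y \<in> A \<Longrightarrow> join x (meet x y) = x" using OL unfolding ortholattice_on_def by auto
lemma zm: "x \<in> A \<Longrightarrow> meet z x = z" using OL unfolding ortholattice_on_def by auto
lemma uj: "x \<in> A \<Longrightarrow> join u x = u" using OL unfolding ortholattice_on_def by auto
lemma cc[simp]: "x \<in> A \<Longrightarrow> compl (compl x) = x" using OL unfolding ortholattice_on_def by auto
lemma contra: "x \<in> A \<Longrightarrow> y \<in> A \<Longrightarrow> meet x y = x \<Longrightarrow> meet (compl y) (compl x) = compl y"
  using OL unfolding ortholattice_on_def by auto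
lemma cm: "x \<in> A \<Longrightarrow> meet x (compl x) = z" using OL unfolding ortholattice_on_def by auto
lemma cj: "x \<in> A \<Longrightarrow> join x (compl x) = u" using OL unfolding ortholattice_on_def by auto
lemma wlaw: "a \<in> A \<Longrightarrow> b \<in> A \<Longrightarrow> join (join (meet (compl a) (join a b)) (compl b)) (meet a b) = u"
  using WO unfolding woml_on_def by auto

definition le where "le x y \<longleftrightarrow> meet x y = x"

lemma midem: "x \<in> A \<Longrightarrow> meet x x = x" by (metis ab1 ab2 mA)
lemma jidem: "x \<in> A \<Longrightarrow> join x x = x" by (metis ab1 ab2 jA)
lemma le_join: "x \<in> A \<Longrightarrow> y \<in> A \<Longrightarrow> le x y \<longleftrightarrow> join x y = y"
  unfolding le_def by (metis ab1 ab2 jc mc)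
lemma le_refl[simp]: "x \<in> A \<Longrightarrow> le x x" by (simp add: le_def midem)
lemma le_trans: "le x y \<Longrightarrow> le y w \<Longrightarrow> x \<in> A \<Longrightarrow> y \<in> A \<Longrightarrow> w \<in> A \<Longrightarrow> le x w"
  unfolding le_def by (metis ma)
lemma le_antisym: "le x y \<Longrightarrow> le y x \<Longrightarrow> x \<in> A \<Longrightarrow> y \<in> A \<Longrightarrow> x = y"
  unfolding le_def by (metis mc)
lemma meet_le1[simp]: "x \<in> A \<Longrightarrow> y \<in> A \<Longrightarrow> le (meet x y) x"
  unfolding le_def by (metis ma mc midem)
lemma meet_le2[simp]: "x \<in> A \<Longrightarrow> y \<in> A \<Longrightarrow> le (meet x y) y"
  unfolding le_def by (metis ma midem)
lemma le_meetI: "le x y \<Longrightarrow> le x w \<Longrightarrow> x \<in> A \<Longrightarrow> y \<in> A \<Longrightarrow> w \<in> A \<Longrightarrow> le x (meet y w)"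
  unfolding le_def by (metis ma)
lemma join_ge1[simp]: "x \<in> A \<Longrightarrow> y \<in> A \<Longrightarrow> le x (join x y)"
  unfolding le_def by (simp add: ab1)
lemma join_ge2[simp]: "x \<in> A \<Longrightarrow> y \<in> A \<Longrightarrow> le y (join x y)"
  unfolding le_def by (metis ab1 jc)
lemma join_leI: "le x w \<Longrightarrow> le y w \<Longrightarrow> x \<in> A \<Longrightarrow> y \<in> A \<Longrightarrow> w \<in> A \<Longrightarrow> le (join x y) w"
  using le_join by (metis ja jA)
lemma compl_anti: "le x y \<Longrightarrow> x \<in> A \<Longrightarrow> y \<in> A \<Longrightarrow> le (compl y) (compl x)"
  unfolding le_def using contra by blast
lemma compl_anti_iff: "x \<in> A \<Longrightarrow> y \<in> A \<Longrightarrow> le (compl y) (compl x) \<longleftrightarrow> le x y"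
  by (metis cA cc compl_anti)
lemma z_le[simp]: "x \<in> A \<Longrightarrow> le z x" unfolding le_def by (simp add: zm)
lemma le_u[simp]: "x \<in> A \<Longrightarrow> le x u" using le_join uj jc by (metis uA)

lemma dm_join: "x \<in> A \<Longrightarrow> y \<in> A \<Longrightarrow> compl (join x y) = meet (compl x) (compl y)"
proof -
  assume x: "x \<in> A" and y: "y \<in> A"
  have 1: "le (compl (join x y)) (meet (compl x) (compl y))"
    using x y by (intro le_meetI compl_anti) auto
  have "le x (compl (meet (compl x) (compl y)))"
    using x y compl_anti[of "meet (compl x) (compl y)" "compl x"] by simp
  moreover have "le y (compl (meet (compl x) (compl y)))"
    using x y compl_anti[of "meet (compl x) (compl y)" "compl y"] by simp
  ultimately have "le (join x y) (compl (meet (compl x) (compl y)))"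
    using x y by (intro join_leI) auto
  then have "le (meet (compl x) (compl y)) (compl (join x y))"
    using x y compl_anti[of "join x y" "compl (meet (compl x) (compl y))"] by simp
  then show ?thesis using le_antisym[OF 1] x y by simp
qed
lemma dm_meet: "x \<in> A \<Longrightarrow> y \<in> A \<Longrightarrow> compl (meet x y) = join (compl x) (compl y)"
proof -
  assume x: "x \<in> A" and y: "y \<in> A"
  have "compl (join (compl x) (compl y)) = meet x y" using dm_join[of "compl x" "compl y"] x y by simp
  then have "compl (compl (join (compl x) (compl y))) = compl (meet x y)" by simp
  then show ?thesis using x y by simp
qed
lemma jz[simp]: "x \<in> A \<Longrightarrow> join z x = x" using le_join[of z x] z_le[of x] by simp
lemma jz2[simp]: "x \<in> A \<Longrightarrow> join x z = x" using jc[of x z] jz[of x] by simp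
lemma uj2[simp]: "x \<in> A \<Longrightarrow> join x u = u" using jc[of x u] uj[of x] by simp
lemma zm2[simp]: "x \<in> A \<Longrightarrow> meet x z = z" using mc[of x z] zm[of x] by simp
lemma mu2[simp]: "x \<in> A \<Longrightarrow> meet x u = x" using le_u[of x] unfolding le_def .
lemma mu[simp]: "x \<in> A \<Longrightarrow> meet u x = x" using mc[of x u] mu2[of x] by simp
lemma cz[simp]: "compl z = u" using cj[of z] jz[of "compl z"] by simp
lemma cu[simp]: "compl u = z" using cc[of z] cz by simp
lemma le_uD: "le u x \<Longrightarrow> x \<in> A \<Longrightarrow> x = u" using le_antisym[of u x] le_u[of x] by simp
lemma le_zD: "le x z \<Longrightarrow> x \<in> A \<Longrightarrow> x = z" using le_antisym[of x z] z_le[of x] by simp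

lemma meet_mono: "le x y \<Longrightarrow> le x' y' \<Longrightarrow> x \<in> A \<Longrightarrow> y \<in> A \<Longrightarrow> x' \<in> A \<Longrightarrow> y' \<in> A \<Longrightarrow> le (meet x x') (meet y y')"
  by (rule le_meetI) (auto intro: le_trans[of _ x] le_trans[of _ "x'"])
lemma join_mono: "le x y \<Longrightarrow> le x' y' \<Longrightarrow> x \<in> A \<Longrightarrow> y \<in> A \<Longrightarrow> x' \<in> A \<Longrightarrow> y' \<in> A \<Longrightarrow> le (join x x') (join y y')"
  by (rule join_leI) (auto intro: le_trans[of _ y] le_trans[of _ "y'"])


lemma eq_u: "le u x \<Longrightarrow> x \<in> A \<Longrightarrow> x = u" by (rule le_uD)

definition pre where "pre x y \<longleftrightarrow> join (compl x) (meet x y) = u"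

lemma P0: "le x y \<Longrightarrow> x \<in> A \<Longrightarrow> y \<in> A \<Longrightarrow> pre x y"
  unfolding pre_def le_def using jc[of "compl x" x] cj[of x] by simp

lemma P1: assumes a: "a \<in> A" and b: "b \<in> A" and h: "pre a b" shows "pre (compl b) (compl a)"
proof -
  have w: "join (join (meet a (join (compl a) (compl b))) b) (meet (compl a) (compl b)) = u"
    using wlaw[of "compl a" "compl b"] a b by simp
  have "meet a (join (compl a) (compl b)) = compl (join (compl a) (meet a b))"
    using a b by (simp add: dm_join dm_meet)
  also have "\<dots> = z" using h unfolding pre_def by simp
  finally have "join b (meet (compl a) (compl b)) = u" using w a b by simp
  then show ?thesis unfolding pre_def using a b mc[of "compl a" "compl b"] by simp
qed

lemma P1': assumes a: "a \<in> A" and b: "b \<in> A" and h: "pre (compl b) (compl a)" shows "pre a b"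
  using P1[OF cA[OF b] cA[OF a] h] a b by simp

lemma P1iff: "a \<in> A \<Longrightarrow> b \<in> A \<Longrightarrow> pre (compl b) (compl a) \<longleftrightarrow> pre a b"
  using P1 P1' by blast

lemma P2: assumes x: "x \<in> A" and y: "y \<in> A" and c: "c \<in> A" and l: "le x y" and h: "pre y c"
  shows "pre x c"
proof -
  have "pre (compl c) (compl y)" using P1 y c h by blast
  then have 1: "join c (meet (compl c) (compl y)) = u" unfolding pre_def using c by simp
  have "le (join c (meet (compl c) (compl y))) (join c (meet (compl c) (compl x)))"
    using x y c l by (intro join_mono meet_mono compl_anti) auto
  then have "join c (meet (compl c) (compl x)) = u" using 1 x c by (intro eq_u) auto
  then have "pre (compl c) (compl x)" unfolding pre_def using c by simp
  then show ?thesis using P1' x c by blast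
qed

lemma P3: assumes d: "d \<in> A" and a: "a \<in> A" and c: "c \<in> A" and l: "le d a"
  and h1: "pre a d" and h2: "pre d c" shows "pre a c"
proof -
  define g where "g = meet a (compl (meet a c))"
  have g: "g \<in> A" unfolding g_def using a c by simp
  have md: "meet a d = d" using l a d mc unfolding le_def by metis
  have ad: "join (compl a) d = u" using h1 md unfolding pre_def by simp
  have "le (meet d g) (meet d (compl (meet d c)))"
    unfolding g_def using a c d l
    by (intro meet_mono) (auto intro!: le_trans[OF meet_le2] compl_anti meet_mono)
  moreover have "meet d (compl (meet d c)) = z"
  proof -
    have "compl (join (compl d) (meet d c)) = z" using h2 unfolding pre_def by simp
    then show ?thesis using d c by (simp add: dm_join)
  qed
  ultimately have dg: "meet d g = z" using d g by (intro le_zD) auto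
  have "le (compl a) (compl d)" using compl_anti l a d by blast
  moreover have "le (compl a) (compl g)" unfolding g_def using a c by (intro compl_anti) auto
  ultimately have "le (join d (compl a)) (join d (meet (compl d) (compl g)))"
    using a d g by (intro join_mono le_meetI) auto
  moreover have "join d (compl a) = u" using ad jc a d by (metis cA)
  ultimately have dd: "join d (meet (compl d) (compl g)) = u" using d g by (intro eq_u) auto
  have "meet (compl d) (join d g) = compl (join d (meet (compl d) (compl g)))"
    using d g by (simp add: dm_join dm_meet)
  also have "\<dots> = z" using dd by simp
  finally have "compl g = u" using wlaw[OF d g] dg d g by simp
  moreover have "compl g = join (compl a) (meet a c)"
    unfolding g_def using a c dm_meet[of a "compl (meet a c)"] by simp
  ultimately show ?thesis unfolding pre_def by simp
qed

lemma P5: "x \<in> A \<Longrightarrow> y \<in> A \<Longrightarrow> pre x y \<longleftrightarrow> pre x (meet x y)"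
  unfolding pre_def by (simp add: ma[symmetric] midem)

lemma P4: assumes x: "x \<in> A" and y: "y \<in> A" and w: "w \<in> A" and h1: "pre x y" and h2: "pre y w"
  shows "pre x w"
proof -
  have xy: "meet x y \<in> A" using x y by simp
  have 1: "pre (meet x y) w" by (rule P2[OF xy y w meet_le2[OF x y] h2])
  have 2: "pre x (meet x y)" using P5[OF x y] h1 by blast
  show ?thesis by (rule P3[OF xy x w meet_le1[OF x y] 2 1])
qed

lemma pre_refl: "x \<in> A \<Longrightarrow> pre x x" by (simp add: P0)

lemma le_pre: "le x y \<Longrightarrow> pre y w \<Longrightarrow> x \<in> A \<Longrightarrow> y \<in> A \<Longrightarrow> w \<in> A \<Longrightarrow> pre x w"
  using P2 by blast
lemma pre_le: assumes "pre x y" "le y w" "x \<in> A" "y \<in> A" "w \<in> A" shows "pre x w"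
  by (rule P4[OF assms(3,4,5) assms(1) P0[OF assms(2,4,5)]])

lemma MC: assumes x: "x \<in> A" and y: "y \<in> A" and c: "c \<in> A" and h1: "pre x y" and h2: "pre x c"
  shows "pre x (meet y c)"
proof -
  have xy: "meet x y \<in> A" using x y by simp
  have "pre (meet x y) c" by (rule P2[OF xy x c meet_le1[OF x y] h2])
  then have 1: "pre (meet x y) (meet (meet x y) c)" using P5[OF xy c] by blast
  have 2: "pre x (meet x y)" using P5[OF x y] h1 by blast
  have 3: "pre x (meet (meet x y) c)" by (rule P4[OF x xy _ 2 1]) (simp add: x y c)
  have 4: "le (meet (meet x y) c) (meet y c)" using x y c by (intro meet_mono) auto
  show ?thesis by (rule pre_le[OF 3 4]) (simp_all add: x y c)
qed

lemma MJ: assumes x: "x \<in> A" and y: "y \<in> A" and c: "c \<in> A" and h1: "pre x c" and h2: "pre y c"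
  shows "pre (join x y) c"
proof -
  have "pre (compl c) (meet (compl x) (compl y))"
    by (rule MC) (simp_all add: x y c P1 h1 h2)
  then have "pre (compl c) (compl (join x y))" using x y by (simp add: dm_join)
  then show ?thesis by (rule P1'[rotated 2]) (simp_all add: x y c)
qed

lemma pre_meet_mono: assumes x: "x \<in> A" and y: "y \<in> A" and x2: "x' \<in> A" and y2: "y' \<in> A"
  and h1: "pre x y" and h2: "pre x' y'" shows "pre (meet x x') (meet y y')"
proof -
  have xx: "meet x x' \<in> A" using x x2 by simp
  have 1: "pre (meet x x') y" by (rule le_pre[OF meet_le1[OF x x2] h1 xx x y])
  have 2: "pre (meet x x') y'" by (rule le_pre[OF meet_le2[OF x x2] h2 xx x2 y2])
  show ?thesis by (rule MC[OF xx y y2 1 2])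
qed

lemma pre_join_mono: assumes x: "x \<in> A" and y: "y \<in> A" and x2: "x' \<in> A" and y2: "y' \<in> A"
  and h1: "pre x y" and h2: "pre x' y'" shows "pre (join x x') (join y y')"
proof -
  have yy: "join y y' \<in> A" using y y2 by simp
  have 1: "pre x (join y y')" by (rule pre_le[OF h1 join_ge1[OF y y2] x y yy])
  have 2: "pre x' (join y y')" by (rule pre_le[OF h2 join_ge2[OF y y2] x2 y2 yy])
  show ?thesis by (rule MJ[OF x x2 yy 1 2])
qed

lemma OMp: assumes x: "x \<in> A" and y: "y \<in> A" and l: "le x y"
  shows "pre y (join x (meet (compl x) y))"
proof -
  have t: "le (join x (meet (compl x) y)) y" using x y l by (intro join_leI) auto
  then have "meet y (join x (meet (compl x) y)) = join x (meet (compl x) y)"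
    using x y mc[of y "join x (meet (compl x) y)"] unfolding le_def by simp
  moreover have "join (compl y) (join x (meet (compl x) y)) = u"
  proof -
    have "join (compl y) (join x (meet (compl x) y)) = join (join (compl y) x) (meet (compl x) y)"
      using x y by (simp add: ja)
    also have "join (compl y) x = compl (meet (compl x) y)"
      using x y jc by (simp add: dm_meet)
    finally show ?thesis using x y cj[of "meet (compl x) y"] jc[of "compl (meet (compl x) y)" "meet (compl x) y"] by simp
  qed
  ultimately show ?thesis unfolding pre_def by simp
qed

lemma OMd: assumes f: "f \<in> A" and k: "k \<in> A" and l: "le f k"
  shows "pre (meet k (join (compl k) f)) f"
proof -
  have "pre (compl f) (join (compl k) (meet k (compl f)))"
    using OMp[of "compl k" "compl f"] f k compl_anti[OF l f k] by simp
  then have "pre (compl f) (compl (meet k (join (compl k) f)))" using f k by (simp add: dm_join dm_meet)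
  then show ?thesis by (rule P1'[rotated 2]) (simp_all add: f k)
qed

lemma pre_zD: assumes h: "pre x z" and x: "x \<in> A" shows "x = z"
proof -
  have "compl x = u" using h x unfolding pre_def by simp
  then have "compl (compl x) = z" by simp
  then show ?thesis using x by simp
qed


lemma orth: "le x a \<Longrightarrow> le y (compl a) \<Longrightarrow> x \<in> A \<Longrightarrow> y \<in> A \<Longrightarrow> a \<in> A \<Longrightarrow> le x (compl y)"
  by (metis cA cc compl_anti le_trans)
lemma le_joinI1: "le x y \<Longrightarrow> x \<in> A \<Longrightarrow> y \<in> A \<Longrightarrow> w \<in> A \<Longrightarrow> le x (join y w)"
  by (rule le_trans[OF _ join_ge1]) auto
lemma le_joinI2: "le x w \<Longrightarrow> x \<in> A \<Longrightarrow> y \<in> A \<Longrightarrow> w \<in> A \<Longrightarrow> le x (join y w)"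
  by (rule le_trans[OF _ join_ge2]) auto
lemma le_meetE1: "le x w \<Longrightarrow> x \<in> A \<Longrightarrow> y \<in> A \<Longrightarrow> w \<in> A \<Longrightarrow> le (meet x y) w"
  by (rule le_trans[OF meet_le1]) auto
lemma le_meetE2: "le y w \<Longrightarrow> x \<in> A \<Longrightarrow> y \<in> A \<Longrightarrow> w \<in> A \<Longrightarrow> le (meet x y) w"
  by (rule le_trans[OF meet_le2]) auto
lemma le_compl_swap: "le x (compl y) \<Longrightarrow> x \<in> A \<Longrightarrow> y \<in> A \<Longrightarrow> le y (compl x)"
  by (metis cA cc compl_anti)

lemma CH: assumes a0: "a0 \<in> A" and b0: "b0 \<in> A" and h: "pre a0 (join (compl b0) (meet a0 b0))"
  shows "pre a0 (join (meet a0 b0) (meet a0 (compl b0)))"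
proof -
  define x where "x = meet a0 b0"
  have x: "x \<in> A" unfolding x_def using a0 b0 by simp
  have xa: "le x a0" and xb: "le x b0" unfolding x_def using a0 b0 by auto
  have 1: "pre a0 (join x (meet (compl x) a0))" by (rule OMp[OF x a0 xa])
  have 2: "pre (meet (compl x) a0) (meet (compl x) (join (compl b0) x))"
    by (rule pre_meet_mono) (use a0 b0 x h pre_refl in \<open>auto simp: x_def\<close>)
  have "pre (meet (compl x) (join (compl (compl x)) (compl b0))) (compl b0)"
    by (rule OMd) (use a0 b0 x xb compl_anti in auto)
  then have 3: "pre (meet (compl x) (join (compl b0) x)) (compl b0)"
    using x b0 jc[of x "compl b0"] by simp
  have 4: "pre (meet (compl x) a0) a0" using a0 x by (intro P0) auto
  have 45: "pre (meet (compl x) a0) (compl b0)" by (rule P4[OF _ _ _ 2 3]) (use a0 b0 x in auto)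
  have 5: "pre (meet (compl x) a0) (meet a0 (compl b0))" by (rule MC[OF _ _ _ 4 45]) (use a0 b0 x in auto)
  have 6: "pre (join x (meet (compl x) a0)) (join x (meet a0 (compl b0)))"
    by (rule pre_join_mono[OF _ _ _ _ pre_refl 5]) (use a0 b0 x in auto)
  show ?thesis using P4[OF _ _ _ 1 6] a0 b0 x unfolding x_def by simp
qed

lemma main: assumes a: "a \<in> A" and b: "b \<in> A" and c: "c \<in> A"
  shows "join (compl (join (meet a b) (meet (compl a) (compl b))))
     (join (meet (join (meet a c) (meet (compl a) (compl c))) (join (meet b c) (meet (compl b) (compl c))))
           (meet (compl (join (meet a c) (meet (compl a) (compl c)))) (compl (join (meet b c) (meet (compl b) (compl c)))))) = u"
proof -
  define e where "e = meet a b"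
  define f where "f = meet (compl a) (compl b)"
  define p where "p = join e f"
  define q where "q = join (meet a c) (meet (compl a) (compl c))"
  define r where "r = join (meet b c) (meet (compl b) (compl c))"
  define s where "s = join (meet q r) (meet (compl q) (compl r))"
  define G where "G = join (meet a c) (meet b c)"
  define N where "N = join (meet (compl a) (compl c)) (meet (compl b) (compl c))"
  define K where "K = join f N"
  define Kc where "Kc = compl K"
  define m where "m = meet q r"
  define X0 where "X0 = meet p (join q r)"
  define X where "X = meet p (compl s)"
  have mem: "e \<in> A" "f \<in> A" "p \<in> A" "q \<in> A" "r \<in> A" "s \<in> A" "G \<in> A" "N \<in> A" "K \<in> A" "Kc \<in> A"
    "m \<in> A" "X0 \<in> A" "X \<in> A"
    unfolding e_def f_def p_def q_def r_def s_def G_def N_def K_def Kc_def m_def X0_def X_def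
    using a b c by simp_all
  note A = a b c mem
  have ea: "le e a" and eb: "le e b" unfolding e_def using a b by auto
  have fa: "le f (compl a)" and fb: "le f (compl b)" unfolding f_def using a b by auto
  have Gc: "le G c" unfolding G_def using a b c by (intro join_leI) auto
  have Nc: "le N (compl c)" unfolding N_def using a b c by (intro join_leI) auto
  have fe: "le f (compl e)" by (rule le_compl_swap[OF orth[OF ea fa]]) (use A in auto)
  have Ne: "le N (compl e)" unfolding N_def
    by (intro join_leI le_compl_swap[OF orth[OF ea]] le_compl_swap[OF orth[OF eb]]) (use A in auto)
  have Ge: "le G (compl f)" unfolding G_def
    by (intro join_leI orth[OF _ fa] orth[OF _ fb]) (use A in auto)
  have GN: "le G (compl N)" by (rule orth[OF Gc Nc]) (use A in auto)
  have Ke: "le K (compl e)" unfolding K_def by (rule join_leI[OF fe Ne]) (use A in auto)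
  have eK: "le e Kc" unfolding Kc_def by (rule le_compl_swap[OF Ke]) (use A in auto)
  have KG: "le K (compl G)" unfolding K_def
    by (rule join_leI[OF le_compl_swap[OF Ge] le_compl_swap[OF GN]]) (use A in auto)
  have GK: "le G Kc" unfolding Kc_def by (rule le_compl_swap[OF KG]) (use A in auto)
  have fK: "le f K" and NK: "le N K" unfolding K_def using A by auto
  have KcK: "compl Kc = K" unfolding Kc_def using A by simp
  have qr: "le (join q r) (join G N)" unfolding q_def r_def G_def N_def
    by (intro join_leI le_joinI1 le_joinI2 join_ge1 join_ge2, simp_all add: A)
  have Nqr: "le N (join q r)" unfolding q_def r_def N_def
    by (intro join_leI le_joinI1 le_joinI2 join_ge1 join_ge2, simp_all add: A)
  have fp: "le f p" and ep: "le e p" unfolding p_def using A by auto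
  define V where "V = meet (join Kc f) (join Kc N)"
  have V: "V \<in> A" unfolding V_def using A by simp
  have pKf: "le p (join Kc f)" unfolding p_def by (intro join_leI le_joinI1 eK join_ge2, simp_all add: A)
  have qrKN: "le (join q r) (join Kc N)"
    by (rule le_trans[OF qr join_mono[OF GK le_refl]]) (use A in simp_all)
  have X0V: "le X0 V" unfolding X0_def V_def by (intro meet_mono pKf qrKN, simp_all add: A)
  have pV: "pre V (join Kc (meet K V))"
    using OMp[OF mem(10) V] KcK A unfolding V_def by (simp add: le_meetI)
  have K1: "pre (meet K (join Kc f)) f" using OMd[OF mem(2) mem(9) fK] KcK by (simp add: Kc_def)
  have K2: "pre (meet K (join Kc N)) N" using OMd[OF mem(8) mem(9) NK] KcK by (simp add: Kc_def)
  have KV1: "pre (meet K V) f"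
    by (rule le_pre[OF _ K1]) (unfold V_def, intro meet_mono, simp_all add: A V)
  have KV2: "pre (meet K V) N"
    by (rule le_pre[OF _ K2]) (unfold V_def, intro meet_mono, simp_all add: A V)
  have KV: "pre (meet K V) (meet f N)" by (rule MC[OF _ _ _ KV1 KV2]) (use A V in auto)
  have J1: "pre (join Kc (meet K V)) (join Kc (meet f N))"
    by (rule pre_join_mono[OF _ _ _ _ pre_refl KV]) (use A V in auto)
  have "pre V (join Kc (meet f N))" by (rule P4[OF _ _ _ pV J1]) (use A V in auto)
  then have X0a: "pre X0 (join Kc (meet f N))" by (rule le_pre[OF X0V]) (use A V in auto)
  have fNX0: "le (meet f N) (meet X0 K)" unfolding X0_def
    by (intro le_meetI le_meetE1[OF fp] le_meetE2[OF Nqr] le_meetE1[OF fK], simp_all add: A)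
  have "pre X0 (join Kc (meet X0 K))"
    by (rule pre_le[OF X0a join_mono[OF le_refl fNX0]]) (use A in auto)
  then have "pre X0 (join (compl K) (meet X0 K))" by (simp add: Kc_def)
  then have X0b: "pre X0 (join (meet X0 K) (meet X0 Kc))" unfolding Kc_def using CH A by simp
  have XK1: "pre (meet X0 K) f"
    by (rule le_pre[OF _ K1]) (unfold X0_def, intro le_meetI le_meetE1[OF le_meetE1[OF pKf]] meet_le2, simp_all add: A)
  have XK2: "pre (meet X0 K) N"
    by (rule le_pre[OF _ K2]) (unfold X0_def, intro le_meetI le_meetE1[OF le_meetE2[OF qrKN]] meet_le2, simp_all add: A)
  have XK: "pre (meet X0 K) (meet f N)" by (rule MC[OF _ _ _ XK1 XK2]) (use A in auto)
  have L1: "pre (meet Kc (join K e)) e" using OMd[OF mem(1) mem(10) eK] KcK by simp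
  have L2: "pre (meet Kc (join K G)) G" using OMd[OF mem(7) mem(10) GK] KcK by simp
  have pKe: "le p (join K e)" unfolding p_def by (intro join_leI le_joinI1 fK join_ge2, simp_all add: A)
  have qrKG: "le (join q r) (join K G)"
    by (rule le_trans[OF qr]) (intro join_leI join_ge2 le_joinI1 NK, simp_all add: A)
  have XKc1: "pre (meet X0 Kc) e"
    by (rule le_pre[OF _ L1]) (unfold X0_def, intro le_meetI le_meetE1[OF le_meetE1[OF pKe]] meet_le2, simp_all add: A)
  have XKc2: "pre (meet X0 Kc) G"
    by (rule le_pre[OF _ L2]) (unfold X0_def, intro le_meetI le_meetE1[OF le_meetE2[OF qrKG]] meet_le2, simp_all add: A)
  have XKc: "pre (meet X0 Kc) (meet e G)" by (rule MC[OF _ _ _ XKc1 XKc2]) (use A in auto)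
  have J2: "pre (join (meet X0 K) (meet X0 Kc)) (join (meet f N) (meet e G))"
    by (rule pre_join_mono[OF _ _ _ _ XK XKc]) (use A in auto)
  have X0c: "pre X0 (join (meet f N) (meet e G))" by (rule P4[OF _ _ _ X0b J2]) (use A in auto)
  have eGq: "le (meet e G) q" unfolding q_def
    by (rule le_joinI1) (intro le_meetI le_meetE1[OF ea] le_meetE2[OF Gc], simp_all add: A)+
  have eGr: "le (meet e G) r" unfolding r_def
    by (rule le_joinI1) (intro le_meetI le_meetE1[OF eb] le_meetE2[OF Gc], simp_all add: A)+
  have fNq: "le (meet f N) q" unfolding q_def
    by (rule le_joinI2) (intro le_meetI le_meetE1[OF fa] le_meetE2[OF Nc], simp_all add: A)+
  have fNr: "le (meet f N) r" unfolding r_def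
    by (rule le_joinI2) (intro le_meetI le_meetE1[OF fb] le_meetE2[OF Nc], simp_all add: A)+
  have "le (join (meet f N) (meet e G)) m" unfolding m_def
    by (intro join_leI le_meetI fNq fNr eGq eGr, simp_all add: A)
  then have X0m: "pre X0 m" by (rule pre_le[OF X0c]) (use A in auto)
  have cs: "compl s = meet (compl m) (join q r)" unfolding s_def m_def using A by (simp add: dm_join dm_meet)
  have XX0: "le X X0" unfolding X_def X0_def cs by (intro meet_mono le_refl meet_le2, simp_all add: A)
  have Xm: "pre X m" by (rule le_pre[OF XX0 X0m]) (use A in auto)
  have Xm': "pre X (compl m)" unfolding X_def cs by (intro P0 le_meetE2 meet_le1, simp_all add: A)
  have "pre X (meet m (compl m))" by (rule MC[OF _ _ _ Xm Xm']) (use A in auto)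
  then have "X = z" using cm[of m] A by (intro pre_zD) auto
  then have "compl X = u" by simp
  moreover have "compl X = join (compl p) s" unfolding X_def using A by (simp add: dm_meet)
  ultimately show ?thesis unfolding p_def e_def f_def s_def q_def r_def by simp
qed

end

definition "A14 = ({0,1,2,3,4,5,6,9,18,27,36,45,54,63} :: nat set)"
definition c14 :: "nat \<Rightarrow> nat" where "c14 x = (if x = 0 then 63 else if x = 1 then 54 else if x = 2 then 45
  else if x = 3 then 36 else if x = 4 then 27 else if x = 5 then 18 else if x = 6 then 9 else if x = 9 then 6
  else if x = 18 then 5 else if x = 27 then 4 else if x = 36 then 3 else if x = 45 then 2 else if x = 54 then 1
  else 0)"
definition m14 :: "nat \<Rightarrow> nat \<Rightarrow> nat" where "m14 x y = Bit_Operations.and x y"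
definition j14 :: "nat \<Rightarrow> nat \<Rightarrow> nat" where "j14 x y = c14 (m14 (c14 x) (c14 y))"
lemma cv: "c14 0 = 63" "c14 1 = 54" "c14 (Suc 0) = 54" "c14 2 = 45" "c14 3 = 36" "c14 4 = 27" "c14 5 = 18" "c14 6 = 9" "c14 9 = 6"
  "c14 18 = 5" "c14 27 = 4" "c14 36 = 3" "c14 45 = 2" "c14 54 = 1" "c14 63 = 0" "c14 (Suc (Suc 0)) = 45" "c14 (Suc (Suc (Suc 0))) = 36" "c14 (Suc (Suc (Suc (Suc 0)))) = 27" "c14 (Suc (Suc (Suc (Suc (Suc 0))))) = 18" "c14 (Suc (Suc (Suc (Suc (Suc (Suc 0)))))) = 9" "c14 (Suc (Suc (Suc (Suc (Suc (Suc (Suc (Suc (Suc 0))))))))) = 6" by (simp_all add: c14_def)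
lemma C1: "\<forall>x\<in>A14. \<forall>y\<in>A14. m14 x y \<in> A14" unfolding A14_def m14_def by (simp add: cv)
lemma C2: "\<forall>x\<in>A14. c14 x \<in> A14" unfolding A14_def by (simp add: cv)
lemma C3: "\<forall>x\<in>A14. c14 (c14 x) = x" unfolding A14_def by (simp add: cv)
lemma C4: "\<forall>x\<in>A14. \<forall>y\<in>A14. m14 x y = x \<longrightarrow> m14 (c14 y) (c14 x) = c14 y"
  unfolding A14_def m14_def by (simp add: cv)
lemma C5: "\<forall>x\<in>A14. m14 x (c14 x) = 0" unfolding A14_def m14_def by (simp add: cv)
lemma C7: "\<forall>a\<in>A14. \<forall>b\<in>A14. j14 (j14 (m14 (c14 a) (j14 a b)) (c14 b)) (m14 a b) = 63"
  unfolding A14_def j14_def m14_def by (simp add: cv)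
lemma mcomm: "m14 x y = m14 y x" unfolding m14_def by (rule and.commute)
lemma massoc: "m14 (m14 x y) w = m14 x (m14 y w)" unfolding m14_def by (rule and.assoc)
lemma mle: "m14 (m14 x y) x = m14 x y" "m14 (m14 x y) y = m14 x y" unfolding m14_def
  by (metis and.assoc and.commute and.idem)+
lemma m0: "m14 0 x = 0" unfolding m14_def by simp
lemma jA14: "x \<in> A14 \<Longrightarrow> y \<in> A14 \<Longrightarrow> j14 x y \<in> A14" unfolding j14_def using C1 C2 by blast
lemma jassoc: assumes x: "x \<in> A14" and y: "y \<in> A14" and w: "w \<in> A14"
  shows "j14 (j14 x y) w = j14 x (j14 y w)"
proof -
  have "m14 (c14 x) (c14 y) \<in> A14" "m14 (c14 y) (c14 w) \<in> A14" using x y w C1 C2 by blast+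
  then show ?thesis unfolding j14_def using C3 massoc by simp
qed
lemma ex_woml: "woml_on A14 m14 j14 c14 0 63"
  unfolding woml_on_def ortholattice_on_def
proof (intro conjI ballI)
  show "0 \<in> A14" "63 \<in> A14" unfolding A14_def by simp_all
next
  fix x y assume x: "x \<in> A14" and y: "y \<in> A14"
  show "m14 x y \<in> A14" using C1 x y by blast
  show "j14 x y \<in> A14" using jA14 x y .
  show "m14 x y = m14 y x" by (rule mcomm)
  show "j14 x y = j14 y x" unfolding j14_def by (simp add: mcomm)
  have cx: "c14 x \<in> A14" and cy: "c14 y \<in> A14" using C2 x y by blast+
  have t: "m14 (c14 x) (c14 y) \<in> A14" using C1 cx cy by blast
  show "m14 x (j14 x y) = x"
  proof -
    have "m14 (c14 (c14 x)) (c14 (m14 (c14 x) (c14 y))) = c14 (c14 x)"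
      using C4 t cx mle(1) by blast
    then show ?thesis unfolding j14_def using C3 x by simp
  qed
  show "j14 x (m14 x y) = x"
  proof -
    have xy: "m14 x y \<in> A14" using C1 x y by blast
    have "m14 (c14 x) (c14 (m14 x y)) = c14 x" using C4 xy x mle(1) by blast
    then show ?thesis unfolding j14_def using C3 x by simp
  qed
  show "(m14 x y = x) \<longrightarrow> m14 (c14 y) (c14 x) = c14 y" using C4 x y by blast
  show "j14 (j14 (m14 (c14 x) (j14 x y)) (c14 y)) (m14 x y) = 63" using C7 x y by blast
next
  fix x y w assume x: "x \<in> A14" and y: "y \<in> A14" and w: "w \<in> A14"
  show "m14 (m14 x y) w = m14 x (m14 y w)" by (rule massoc)
  show "j14 (j14 x y) w = j14 x (j14 y w)" using jassoc x y w by simp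
next
  fix x assume x: "x \<in> A14"
  show "c14 x \<in> A14" using C2 x by blast
  show "m14 0 x = 0" by (rule m0)
  show "j14 63 x = 63" unfolding j14_def by (simp add: cv m0)
  show "c14 (c14 x) = x" using C3 x by blast
  show "m14 x (c14 x) = 0" using C5 x by blast
  show "j14 x (c14 x) = 63" unfolding j14_def using C3 C5 x mcomm cv by (metis C2)
qed
lemma ex_ne: "m14 (bieq m14 j14 c14 0 3) (j14 (bieq m14 j14 c14 3 9) (bieq m14 j14 c14 0 9))
  \<noteq> j14 (m14 (bieq m14 j14 c14 0 3) (bieq m14 j14 c14 3 9)) (m14 (bieq m14 j14 c14 0 3) (bieq m14 j14 c14 0 9))"
  unfolding bieq_def j14_def m14_def by (simp add: cv)

theorem theorem5:
  shows "(\<forall>(A :: 'a set) meet join compl z u.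
            woml_on A meet join compl z u \<longrightarrow>
            (\<forall>a\<in>A. \<forall>b\<in>A. \<forall>c\<in>A.
               impl0 join compl (bieq meet join compl a b)
                 (bieq meet join compl (bieq meet join compl a c) (bieq meet join compl b c)) = u))
       \<and> (\<exists>(A :: nat set) meet join compl z u.
            woml_on A meet join compl z u \<and>
            (\<exists>a\<in>A. \<exists>b\<in>A. \<exists>c\<in>A.
               meet (bieq meet join compl a b)
                    (join (bieq meet join compl b c) (bieq meet join compl a c))
               \<noteq> join (meet (bieq meet join compl a b) (bieq meet join compl b c))
                      (meet (bieq meet join compl a b) (bieq meet join compl a c))))"
proof (rule conjI)
  show "\<forall>(A :: 'a set) meet join compl z u.
            woml_on A meet join compl z u \<longrightarrow>
            (\<forall>a\<in>A. \<forall>b\<in>A. \<forall>c\<in>A.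
               impl0 join compl (bieq meet join compl a b)
                 (bieq meet join compl (bieq meet join compl a c) (bieq meet join compl b c)) = u)"
  proof (intro allI impI ballI)
    fix A :: "'a set" and meet join compl z u a b c
    assume h: "woml_on A meet join compl z u" and a: "a \<in> A" and b: "b \<in> A" and c: "c \<in> A"
    have "W A meet join compl z u" using h by (rule W.intro)
    from W.main[OF this a b c]
    show "impl0 join compl (bieq meet join compl a b)
                 (bieq meet join compl (bieq meet join compl a c) (bieq meet join compl b c)) = u"
      unfolding impl0_def bieq_def .
  qed
next
  show "\<exists>(A :: nat set) meet join compl z u.
            woml_on A meet join compl z u \<and>
            (\<exists>a\<in>A. \<exists>b\<in>A. \<exists>c\<in>A.
               meet (bieq meet join compl a b)
                    (join (bieq meet join compl b c) (bieq meet join compl a c))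
               \<noteq> join (meet (bieq meet join compl a b) (bieq meet join compl b c))
                      (meet (bieq meet join compl a b) (bieq meet join compl a c)))"
  proof (intro exI conjI)
    show "woml_on A14 m14 j14 c14 0 63" by (rule ex_woml)
    show "\<exists>a\<in>A14. \<exists>b\<in>A14. \<exists>c\<in>A14.
               m14 (bieq m14 j14 c14 a b)
                    (j14 (bieq m14 j14 c14 b c) (bieq m14 j14 c14 a c))
               \<noteq> j14 (m14 (bieq m14 j14 c14 a b) (bieq m14 j14 c14 b c))
                      (m14 (bieq m14 j14 c14 a b) (bieq m14 j14 c14 a c))"
      apply (rule bexI[of _ "0::nat"])
       apply (rule bexI[of _ "3::nat"])
        apply (rule bexI[of _ "9::nat"])
         apply (rule ex_ne)
      by (simp_all add: A14_def)
  qed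
qed

end
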